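(* Let $\lambda=\langle1^{m_1},2^{m_2},\dots,k^{m_k}\rangle$ with all $m_i>0$, $n\ge1$, $x_1,\dots,x_n>0$, $t>0$, and put $M_j=m_j+\dots+m_k$, $M_{k+1}=0$. For $1\le j\le k$, the stationary current of species $j$ in the mTAZRP of type $\lambda$ on $n$ sites, i.e. $\sum_w\pi(w)\,x_1^{-1}t^{d_j(w)}[c_j(w)]_t$ where $\pi$ is the stationary distribution and $c_j(w)$, $d_j(w)$ are the numbers of particles at site $1$ of species $j$ and of species $>j$ respectively, equals $$[M_j]_t\frac{\widetilde H_{\langle1^{M_j-1}\rangle}(x;1,t)}{\widetilde H_{\langle1^{M_j}\rangle}(x;1,t)}-[M_{j+1}]_t\frac{\widetilde H_{\langle1^{M_{j+1}-1}\rangle}(x;1,t)}{\widetilde H_{\langle1^{M_{j+1}}\rangle}(x;1,t)},$$ where the second term is $0$ when $j=k$ and $x=(x_1,\dots,x_n)$.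
   Context: mTAZRP: for a partition $\lambda$ and $n\ge1$, sites $1,\dots,n$ on a ring (site $n+1$ is site $1$); a configuration assigns to each site a multiset of species with union the multiset of parts of $\lambda$; if site $j$ has $c$ particles of species $r$ and $d$ of species larger than $r$, a particle of species $r$ jumps from $j$ to $j+1$ at rate $x_j^{-1}t^d[c]_t$. $\langle1^{m_1},\dots,k^{m_k}\rangle$ is the partition with part $i$ occurring $m_i$ times. Notation: $[a]_t=1+t+\dots+t^{a-1}$ ($[0]_t=0$), $[a]_t!=\prod_{b\le a}[b]_t$, $\begin{bmatrix}m\\ \eta_1,\dots,\eta_n\end{bmatrix}_t=[m]_t!/\prod_i[\eta_i]_t!$, $\widetilde H_{\langle1^m\rangle}(x_1,\dots,x_n;1,t)=\sum_{\eta_1+\dots+\eta_n=m,\ \eta_i\ge0}\begin{bmatrix}m\\ \eta_1,\dots,\eta_n\end{bmatrix}_t\prod_i x_i^{\eta_i}$, with $\widetilde H_{\langle1^0\rangle}=1$. *)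

theory Defs
  imports Complex_Main
begin

definition qint :: "real \<Rightarrow> nat \<Rightarrow> real" where
  "qint t a = (\<Sum>i<a. t ^ i)"

definition qfact :: "real \<Rightarrow> nat \<Rightarrow> real" where
  "qfact t a = (\<Prod>b=1..a. qint t b)"

definition compositions :: "nat \<Rightarrow> nat \<Rightarrow> (nat \<Rightarrow> nat) set" where
  "compositions n m = {\<eta>. (\<forall>i. i \<notin> {1..n} \<longrightarrow> \<eta> i = 0) \<and> (\<Sum>i=1..n. \<eta> i) = m}"

text \<open>Modified Macdonald polynomial H~_{<1^m>}(x_1,...,x_n;1,t).\<close>
definition Htilde1 :: "nat \<Rightarrow> (nat \<Rightarrow> real) \<Rightarrow> real \<Rightarrow> nat \<Rightarrow> real" where
  "Htilde1 n x t m =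
     (\<Sum>\<eta>\<in>compositions n m.
        qfact t m / (\<Prod>i=1..n. qfact t (\<eta> i)) * (\<Prod>i=1..n. x i ^ \<eta> i))"

text \<open>Configurations of the mTAZRP of type <1^{m_1},...,k^{m_k}> on sites 1..n:
  w j r = number of particles of species r at site j.\<close>
definition configs :: "nat \<Rightarrow> (nat \<Rightarrow> nat) \<Rightarrow> nat \<Rightarrow> (nat \<Rightarrow> nat \<Rightarrow> nat) set" where
  "configs k m n = {w. (\<forall>j r. w j r \<noteq> 0 \<longrightarrow> j \<in> {1..n} \<and> r \<in> {1..k})
                      \<and> (\<forall>r\<in>{1..k}. (\<Sum>j=1..n. w j r) = m r)}"

definition nxt :: "nat \<Rightarrow> nat \<Rightarrow> nat" where
  "nxt n j = (if j = n then 1 else j + 1)"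

definition jump :: "nat \<Rightarrow> (nat \<Rightarrow> nat \<Rightarrow> nat) \<Rightarrow> nat \<Rightarrow> nat \<Rightarrow> (nat \<Rightarrow> nat \<Rightarrow> nat)" where
  "jump n w j r = (\<lambda>i s. w i s - (if i = j \<and> s = r then 1 else 0)
                          + (if i = nxt n j \<and> s = r then 1 else 0))"

definition larger :: "nat \<Rightarrow> (nat \<Rightarrow> nat \<Rightarrow> nat) \<Rightarrow> nat \<Rightarrow> nat \<Rightarrow> nat" where
  "larger k w j r = (\<Sum>s\<in>{r<..k}. w j s)"

definition jump_rate :: "nat \<Rightarrow> (nat \<Rightarrow> real) \<Rightarrow> real \<Rightarrow> (nat \<Rightarrow> nat \<Rightarrow> nat) \<Rightarrow> nat \<Rightarrow> nat \<Rightarrow> real" where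
  "jump_rate k x t w j r = inverse (x j) * t ^ larger k w j r * qint t (w j r)"

definition trans_rate :: "nat \<Rightarrow> nat \<Rightarrow> (nat \<Rightarrow> real) \<Rightarrow> real
      \<Rightarrow> (nat \<Rightarrow> nat \<Rightarrow> nat) \<Rightarrow> (nat \<Rightarrow> nat \<Rightarrow> nat) \<Rightarrow> real" where
  "trans_rate k n x t w w' =
     (\<Sum>j=1..n. \<Sum>r=1..k. if 0 < w j r \<and> jump n w j r = w' then jump_rate k x t w j r else 0)"

definition stationary :: "nat \<Rightarrow> (nat \<Rightarrow> nat) \<Rightarrow> nat \<Rightarrow> (nat \<Rightarrow> real) \<Rightarrow> real
      \<Rightarrow> ((nat \<Rightarrow> nat \<Rightarrow> nat) \<Rightarrow> real) \<Rightarrow> bool" where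
  "stationary k m n x t \<pi> \<longleftrightarrow>
     (\<forall>w\<in>configs k m n. 0 \<le> \<pi> w) \<and> (\<Sum>w\<in>configs k m n. \<pi> w) = 1 \<and>
     (\<forall>w\<in>configs k m n.
        (\<Sum>w'\<in>configs k m n. \<pi> w' * trans_rate k n x t w' w)
        = \<pi> w * (\<Sum>w'\<in>configs k m n. trans_rate k n x t w w'))"

text \<open>Stationary current of species j (across the edge from site 1 to site 2).\<close>
definition current :: "nat \<Rightarrow> (nat \<Rightarrow> nat) \<Rightarrow> nat \<Rightarrow> (nat \<Rightarrow> real) \<Rightarrow> real
      \<Rightarrow> ((nat \<Rightarrow> nat \<Rightarrow> nat) \<Rightarrow> real) \<Rightarrow> nat \<Rightarrow> real" where
  "current k m n x t \<pi> j = (\<Sum>w\<in>configs k m n. \<pi> w * jump_rate k x t w 1 j)"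

end

theory Submission
  imports Defs "HOL-Library.FuncSet"
begin


lemma qint_0[simp]: "qint t 0 = 0" by (simp add: qint_def)
lemma qint_Suc: "qint t (Suc a) = qint t a + t ^ a" by (simp add: qint_def)
lemma qint_pos: "0 < t \<Longrightarrow> 0 < a \<Longrightarrow> 0 < qint t a"
  unfolding qint_def by (rule sum_pos2[where i=0]) auto
lemma qint_nonneg: "0 < t \<Longrightarrow> 0 \<le> qint t a"
  unfolding qint_def by (intro sum_nonneg) auto
lemma qint_add: "qint t (a + b) = qint t b + t ^ b * qint t a"
  by (induction a) (auto simp: qint_Suc algebra_simps power_add)
lemma qfact_Suc: "qfact t (Suc a) = qfact t a * qint t (Suc a)"
  unfolding qfact_def by (simp add: prod.nat_ivl_Suc')
lemma qfact_pos: "0 < t \<Longrightarrow> 0 < qfact t a"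
  unfolding qfact_def by (intro prod_pos) (auto intro: qint_pos)

lemma tele:
  assumes "j0 \<le> Suc k"
  shows "(\<Sum>r=j0..k. t ^ (\<Sum>s\<in>{r<..k}. a s) * qint t (a r)) = qint t (\<Sum>r=j0..k. a r)"
  using assms
proof (induction j0 rule: inc_induct)
  case base then show ?case by simp
next
  case (step p)
  have e: "{p<..k} = {Suc p..k}" by auto
  have "(\<Sum>r=p..k. t ^ (\<Sum>s\<in>{r<..k}. a s) * qint t (a r))
     = t ^ (\<Sum>s\<in>{Suc p..k}. a s) * qint t (a p) + (\<Sum>r=Suc p..k. t ^ (\<Sum>s\<in>{r<..k}. a s) * qint t (a r))"
    using step(2) by (simp add: sum.atLeast_Suc_atMost e)
  also have "\<dots> = qint t (a p + (\<Sum>r=Suc p..k. a r))" using step(3) by (simp add: qint_add)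
  also have "\<dots> = qint t (\<Sum>r=p..k. a r)" using step(2) by (simp add: sum.atLeast_Suc_atMost)
  finally show ?case .
qed



lemma nxt_in: "i \<in> {1..n} \<Longrightarrow> nxt n i \<in> {1..n}"
  by (auto simp: nxt_def)

lemma jump_pt: "0 < w i r \<Longrightarrow> jump n w i r l s + (if l = i \<and> s = r then 1 else 0)
   = w l s + (if l = nxt n i \<and> s = r then 1 else 0)"
  unfolding jump_def by auto

lemma jump_in:
  assumes w: "w \<in> configs k m n" and i: "i \<in> {1..n}" and r: "r \<in> {1..k}" and p: "0 < w i r"
  shows "jump n w i r \<in> configs k m n"
proof -
  have sup: "\<forall>l s. jump n w i r l s \<noteq> 0 \<longrightarrow> l \<in> {1..n} \<and> s \<in> {1..k}"
    using w nxt_in[OF i] r i unfolding configs_def jump_def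
    by (auto split: if_splits)
  have "(\<Sum>l=1..n. jump n w i r l s) = m s" if s: "s \<in> {1..k}" for s
  proof -
    have "(\<Sum>l=1..n. jump n w i r l s) + (\<Sum>l=1..n. (if l = i \<and> s = r then 1 else 0))
        = (\<Sum>l=1..n. w l s) + (\<Sum>l=1..n. (if l = nxt n i \<and> s = r then 1 else 0))"
      by (simp only: sum.distrib[symmetric] jump_pt[where w=w and i=i and r=r, OF p])
    moreover have "(\<Sum>l=1..n. (if l = i \<and> s = r then 1 else 0)::nat) = (if s = r then 1 else 0)"
      using i by (simp add: sum.delta')
    moreover have "(\<Sum>l=1..n. (if l = nxt n i \<and> s = r then 1 else 0)::nat) = (if s = r then 1 else 0)"
      using nxt_in[OF i] by (simp add: sum.delta')
    moreover have "(\<Sum>l=1..n. w l s) = m s" using w s unfolding configs_def by auto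
    ultimately show ?thesis by simp
  qed
  then show ?thesis using sup unfolding configs_def by auto
qed

lemma stat_finite: "stationary k m n x t \<pi> \<Longrightarrow> finite (configs k m n)"
  unfolding stationary_def by (metis sum.infinite zero_neq_one)

lemma trans_sum:
  assumes fin: "finite (configs k m n)" and w': "w' \<in> configs k m n"
  shows "(\<Sum>w\<in>configs k m n. trans_rate k n x t w' w * F w)
     = (\<Sum>i=1..n. \<Sum>r=1..k. if 0 < w' i r then jump_rate k x t w' i r * F (jump n w' i r) else 0)"
proof -
  have "(\<Sum>w\<in>configs k m n. trans_rate k n x t w' w * F w)
     = (\<Sum>w\<in>configs k m n. \<Sum>i=1..n. \<Sum>r=1..k. if 0 < w' i r \<and> jump n w' i r = w then jump_rate k x t w' i r * F w else 0)"
    unfolding trans_rate_def sum_distrib_right by (intro sum.cong refl) simp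
  also have "\<dots> = (\<Sum>i=1..n. \<Sum>r=1..k. \<Sum>w\<in>configs k m n. if 0 < w' i r \<and> jump n w' i r = w then jump_rate k x t w' i r * F w else 0)"
    by (subst sum.swap, rule sum.cong[OF refl], rule sum.swap)
  also have "\<dots> = (\<Sum>i=1..n. \<Sum>r=1..k. if 0 < w' i r then jump_rate k x t w' i r * F (jump n w' i r) else 0)"
  proof (intro sum.cong refl)
    fix i r assume i: "i \<in> {1..n}" and r: "r \<in> {1..k}"
    show "(\<Sum>w\<in>configs k m n. if 0 < w' i r \<and> jump n w' i r = w then jump_rate k x t w' i r * F w else 0)
      = (if 0 < w' i r then jump_rate k x t w' i r * F (jump n w' i r) else 0)"
    proof (cases "0 < w' i r")
      case True
      then show ?thesis using jump_in[OF w' i r True] fin by (simp add: sum.delta)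
    qed simp
  qed
  finally show ?thesis .
qed

lemma gen_pi:
  assumes st: "stationary k m n x t \<pi>"
  shows "(\<Sum>w\<in>configs k m n. \<pi> w * (\<Sum>i=1..n. \<Sum>r=1..k. if 0 < w i r
      then jump_rate k x t w i r * (F (jump n w i r) - F w) else 0)) = 0"
proof -
  let ?C = "configs k m n"
  let ?S = "\<lambda>w G. (\<Sum>i=1..n. \<Sum>r=1..k. if 0 < w i r then jump_rate k x t w i r * G (jump n w i r) else 0)"
  have fin: "finite ?C" using stat_finite[OF st] .
  have bal: "\<And>w. w \<in> ?C \<Longrightarrow> (\<Sum>w'\<in>?C. \<pi> w' * trans_rate k n x t w' w)
        = \<pi> w * (\<Sum>w'\<in>?C. trans_rate k n x t w w')"
    using st unfolding stationary_def by blast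
  have "(\<Sum>w\<in>?C. (\<Sum>w'\<in>?C. \<pi> w' * trans_rate k n x t w' w) * F w)
      = (\<Sum>w\<in>?C. \<pi> w * (\<Sum>w'\<in>?C. trans_rate k n x t w w') * F w)"
    using bal by simp
  moreover have "(\<Sum>w\<in>?C. (\<Sum>w'\<in>?C. \<pi> w' * trans_rate k n x t w' w) * F w)
      = (\<Sum>w'\<in>?C. \<pi> w' * ?S w' F)"
  proof -
    have "(\<Sum>w\<in>?C. (\<Sum>w'\<in>?C. \<pi> w' * trans_rate k n x t w' w) * F w)
        = (\<Sum>w'\<in>?C. \<pi> w' * (\<Sum>w\<in>?C. trans_rate k n x t w' w * F w))"
      unfolding sum_distrib_right sum_distrib_left mult.assoc by (rule sum.swap)
    also have "\<dots> = (\<Sum>w'\<in>?C. \<pi> w' * ?S w' F)"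
      using trans_sum[OF fin] by (intro sum.cong) auto
    finally show ?thesis .
  qed
  moreover have "(\<Sum>w\<in>?C. \<pi> w * (\<Sum>w'\<in>?C. trans_rate k n x t w w') * F w)
      = (\<Sum>w\<in>?C. \<pi> w * ?S w (\<lambda>_. 1) * F w)"
    using trans_sum[OF fin, where F="\<lambda>_. 1"] by (intro sum.cong) auto
  ultimately have eq: "(\<Sum>w\<in>?C. \<pi> w * ?S w F) = (\<Sum>w\<in>?C. \<pi> w * ?S w (\<lambda>_. 1) * F w)" by simp
  have "(\<Sum>w\<in>?C. \<pi> w * (\<Sum>i=1..n. \<Sum>r=1..k. if 0 < w i r
      then jump_rate k x t w i r * (F (jump n w i r) - F w) else 0))
     = (\<Sum>w\<in>?C. \<pi> w * ?S w F - \<pi> w * ?S w (\<lambda>_. 1) * F w)"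
  proof (intro sum.cong refl)
    fix w
    have "(\<Sum>i=1..n. \<Sum>r=1..k. if 0 < w i r
      then jump_rate k x t w i r * (F (jump n w i r) - F w) else 0)
      = (\<Sum>i=1..n. \<Sum>r=1..k. (if 0 < w i r then jump_rate k x t w i r * F (jump n w i r) else 0)
          - (if 0 < w i r then jump_rate k x t w i r * 1 else 0) * F w)"
      by (intro sum.cong refl) (simp add: algebra_simps)
    also have "\<dots> = ?S w F - ?S w (\<lambda>_. 1) * F w"
      by (simp only: sum_subtractf sum_distrib_right)
    finally have eq2: "(\<Sum>i=1..n. \<Sum>r=1..k. if 0 < w i r
      then jump_rate k x t w i r * (F (jump n w i r) - F w) else 0) = ?S w F - ?S w (\<lambda>_. 1) * F w" .
    show "\<pi> w * (\<Sum>i=1..n. \<Sum>r=1..k. if 0 < w i r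
      then jump_rate k x t w i r * (F (jump n w i r) - F w) else 0) = \<pi> w * ?S w F - \<pi> w * ?S w (\<lambda>_. 1) * F w"
      by (subst eq2) (simp only: right_diff_distrib mult.assoc)
  qed
  also have "\<dots> = 0" using eq by (simp add: sum_subtractf)
  finally show ?thesis .
qed



definition prj :: "nat \<Rightarrow> nat \<Rightarrow> (nat \<Rightarrow> nat \<Rightarrow> nat) \<Rightarrow> nat \<Rightarrow> nat" where
  "prj j0 k w = (\<lambda>i. \<Sum>r=j0..k. w i r)"
definition mv :: "nat \<Rightarrow> (nat \<Rightarrow> nat) \<Rightarrow> nat \<Rightarrow> nat \<Rightarrow> nat" where
  "mv n a i = (\<lambda>l. a l - (if l = i then 1 else 0) + (if l = nxt n i then 1 else 0))"
definition rb :: "(nat \<Rightarrow> real) \<Rightarrow> real \<Rightarrow> (nat \<Rightarrow> nat) \<Rightarrow> nat \<Rightarrow> real" where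
  "rb x t a i = inverse (x i) * qint t (a i)"
definition Lbar :: "nat \<Rightarrow> (nat \<Rightarrow> real) \<Rightarrow> real \<Rightarrow> ((nat \<Rightarrow> nat) \<Rightarrow> real) \<Rightarrow> (nat \<Rightarrow> nat) \<Rightarrow> real" where
  "Lbar n x t G a = (\<Sum>i=1..n. rb x t a i * (G (mv n a i) - G a))"

lemma compositions_finite: "finite (compositions n M)"
proof -
  have "compositions n M \<subseteq> (\<lambda>v i. if i \<in> {1..n} then v i else 0) ` (PiE {1..n} (\<lambda>_. {0..M}))"
  proof
    fix \<eta> assume e: "\<eta> \<in> compositions n M"
    have le: "\<eta> i \<le> M" if "i \<in> {1..n}" for i
      using e that member_le_sum[of i "{1..n}" \<eta>] unfolding compositions_def by auto
    have "\<eta> = (\<lambda>i. if i \<in> {1..n} then restrict \<eta> {1..n} i else 0)"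
      using e unfolding compositions_def by auto
    moreover have "restrict \<eta> {1..n} \<in> PiE {1..n} (\<lambda>_. {0..M})" using le by auto
    ultimately show "\<eta> \<in> (\<lambda>v i. if i \<in> {1..n} then v i else 0) ` (PiE {1..n} (\<lambda>_. {0..M}))"
      by blast
  qed
  moreover have "finite (PiE {1..n} (\<lambda>_. {0..M::nat}))" by (intro finite_PiE) auto
  ultimately show ?thesis using finite_subset by blast
qed

lemma prj_in:
  assumes w: "w \<in> configs k m n" and j0: "1 \<le> j0"
  shows "prj j0 k w \<in> compositions n (\<Sum>l=j0..k. m l)"
proof -
  have "(\<Sum>i=1..n. \<Sum>r=j0..k. w i r) = (\<Sum>r=j0..k. \<Sum>i=1..n. w i r)" by (rule sum.swap)
  also have "\<dots> = (\<Sum>r=j0..k. m r)" using w j0 unfolding configs_def by (intro sum.cong) auto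
  finally show ?thesis using w unfolding compositions_def prj_def configs_def
    by (auto intro!: sum.neutral)
qed

lemma prj_jump_hi:
  assumes p: "0 < w i r" and r: "j0 \<le> r" "r \<le> k"
  shows "prj j0 k (jump n w i r) = mv n (prj j0 k w) i"
proof
  fix l
  have "(\<Sum>s=j0..k. jump n w i r l s) + (\<Sum>s=j0..k. (if l = i \<and> s = r then 1 else 0))
        = (\<Sum>s=j0..k. w l s) + (\<Sum>s=j0..k. (if l = nxt n i \<and> s = r then 1 else 0))"
    by (simp only: sum.distrib[symmetric] jump_pt[where w=w and i=i and r=r, OF p])
  moreover have "(\<Sum>s=j0..k. (if l = i \<and> s = r then 1 else 0)::nat) = (if l = i then 1 else 0)"
    using r by (simp add: sum.delta)
  moreover have "(\<Sum>s=j0..k. (if l = nxt n i \<and> s = r then 1 else 0)::nat) = (if l = nxt n i then 1 else 0)"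
    using r by (simp add: sum.delta)
  moreover have "l = i \<Longrightarrow> 1 \<le> (\<Sum>s=j0..k. w l s)"
    using p r member_le_sum[of r "{j0..k}" "w i"] by auto
  ultimately show "prj j0 k (jump n w i r) l = mv n (prj j0 k w) i l"
    unfolding prj_def mv_def by (auto split: if_splits)
qed

lemma prj_jump_lo:
  assumes r: "r < j0"
  shows "prj j0 k (jump n w i r) = prj j0 k w"
  unfolding prj_def jump_def using r by (intro ext sum.cong) auto

lemma larger_eq: "larger k w i r = (\<Sum>s\<in>{r<..k}. w i s)" by (simp add: larger_def)

lemma gen_pt:
  assumes j0: "1 \<le> j0" "j0 \<le> k"
  shows "(\<Sum>r=1..k. if 0 < w i r then jump_rate k x t w i r * (G (prj j0 k (jump n w i r)) - G (prj j0 k w)) else 0)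
       = rb x t (prj j0 k w) i * (G (mv n (prj j0 k w) i) - G (prj j0 k w))"
proof -
  let ?D = "G (mv n (prj j0 k w) i) - G (prj j0 k w)"
  have "(\<Sum>r=1..k. if 0 < w i r then jump_rate k x t w i r * (G (prj j0 k (jump n w i r)) - G (prj j0 k w)) else 0)
      = (\<Sum>r=1..k. (if j0 \<le> r then jump_rate k x t w i r else 0) * ?D)"
  proof (intro sum.cong refl)
    fix r assume r: "r \<in> {1..k}"
    show "(if 0 < w i r then jump_rate k x t w i r * (G (prj j0 k (jump n w i r)) - G (prj j0 k w)) else 0)
      = (if j0 \<le> r then jump_rate k x t w i r else 0) * ?D"
      using prj_jump_hi[of w i r j0 k n] prj_jump_lo[of r j0 k n w i] r
      by (cases "w i r = 0") (auto simp: jump_rate_def)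
  qed
  also have "\<dots> = (\<Sum>r=j0..k. jump_rate k x t w i r) * ?D"
  proof -
    have "(\<Sum>r=1..k. (if j0 \<le> r then jump_rate k x t w i r else 0)) = (\<Sum>r\<in>{1..k} \<inter> {r. j0 \<le> r}. jump_rate k x t w i r)"
      by (simp add: sum.inter_restrict)
    also have "{1..k} \<inter> {r. j0 \<le> r} = {j0..k}" using j0 by auto
    finally have h: "(\<Sum>r=1..k. (if j0 \<le> r then jump_rate k x t w i r else 0)) = (\<Sum>r=j0..k. jump_rate k x t w i r)" .
    show ?thesis by (simp only: sum_distrib_right[symmetric] h)
  qed
  also have "(\<Sum>r=j0..k. jump_rate k x t w i r) = inverse (x i) * qint t (prj j0 k w i)"
    unfolding jump_rate_def larger_eq prj_def
    using tele[of j0 k t "w i"] j0 by (simp add: mult.assoc sum_distrib_left[symmetric])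
  finally show ?thesis by (simp add: rb_def)
qed

definition pb :: "nat \<Rightarrow> (nat \<Rightarrow> nat) \<Rightarrow> nat \<Rightarrow> nat \<Rightarrow> ((nat \<Rightarrow> nat \<Rightarrow> nat) \<Rightarrow> real) \<Rightarrow> (nat \<Rightarrow> nat) \<Rightarrow> real" where
  "pb k m n j0 \<pi> \<eta> = (\<Sum>w\<in>configs k m n. if prj j0 k w = \<eta> then \<pi> w else 0)"

lemma fiber_sum:
  assumes fin: "finite (configs k m n)" and j0: "1 \<le> j0"
  shows "(\<Sum>w\<in>configs k m n. \<pi> w * g (prj j0 k w))
       = (\<Sum>\<eta>\<in>compositions n (\<Sum>l=j0..k. m l). pb k m n j0 \<pi> \<eta> * g \<eta>)"
proof -
  let ?E = "compositions n (\<Sum>l=j0..k. m l)"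
  have "(\<Sum>\<eta>\<in>?E. pb k m n j0 \<pi> \<eta> * g \<eta>)
     = (\<Sum>\<eta>\<in>?E. \<Sum>w\<in>configs k m n. if prj j0 k w = \<eta> then \<pi> w * g \<eta> else 0)"
    unfolding pb_def sum_distrib_right by (intro sum.cong refl) simp
  also have "\<dots> = (\<Sum>w\<in>configs k m n. \<Sum>\<eta>\<in>?E. if prj j0 k w = \<eta> then \<pi> w * g \<eta> else 0)"
    by (rule sum.swap)
  also have "\<dots> = (\<Sum>w\<in>configs k m n. \<pi> w * g (prj j0 k w))"
    using prj_in[OF _ j0] compositions_finite by (intro sum.cong refl) (simp add: sum.delta)
  finally show ?thesis by simp
qed

lemma gen_pb:
  assumes st: "stationary k m n x t \<pi>" and j0: "1 \<le> j0" "j0 \<le> k"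
  shows "(\<Sum>\<eta>\<in>compositions n (\<Sum>l=j0..k. m l). pb k m n j0 \<pi> \<eta> * Lbar n x t G \<eta>) = 0"
proof -
  have "(\<Sum>\<eta>\<in>compositions n (\<Sum>l=j0..k. m l). pb k m n j0 \<pi> \<eta> * Lbar n x t G \<eta>)
     = (\<Sum>w\<in>configs k m n. \<pi> w * Lbar n x t G (prj j0 k w))"
    using fiber_sum[OF stat_finite[OF st] j0(1)] by simp
  also have "\<dots> = (\<Sum>w\<in>configs k m n. \<pi> w * (\<Sum>i=1..n. \<Sum>r=1..k. if 0 < w i r
      then jump_rate k x t w i r * ((G \<circ> prj j0 k) (jump n w i r) - (G \<circ> prj j0 k) w) else 0))"
    unfolding Lbar_def comp_def by (simp only: gen_pt[OF j0])
  also have "\<dots> = 0" by (rule gen_pi[OF st])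
  finally show ?thesis .
qed



definition mb :: "nat \<Rightarrow> (nat \<Rightarrow> nat) \<Rightarrow> nat \<Rightarrow> nat \<Rightarrow> nat" where
  "mb n a i = (\<lambda>l. a l - (if l = nxt n i then 1 else 0) + (if l = i then 1 else 0))"

lemma shift_in:
  assumes a: "a \<in> compositions n M" and p: "p \<in> {1..n}" and q: "q \<in> {1..n}" and pos: "0 < a p"
  shows "(\<lambda>l. a l - (if l = p then 1 else 0) + (if l = q then 1 else 0)) \<in> compositions n M"
proof -
  let ?b = "\<lambda>l. a l - (if l = p then 1 else 0) + (if l = q then 1 else 0)"
  have pt: "\<And>l. ?b l + (if l = p then 1 else 0) = a l + (if l = q then 1 else 0)"
    using pos by auto
  have "(\<Sum>l=1..n. ?b l) + (\<Sum>l=1..n. (if l = p then 1 else 0)) = (\<Sum>l=1..n. a l) + (\<Sum>l=1..n. (if l = q then 1 else 0))"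
    by (simp only: sum.distrib[symmetric] pt)
  then have "(\<Sum>l=1..n. ?b l) = (\<Sum>l=1..n. a l)" using p q by simp
  then show ?thesis using a p q unfolding compositions_def by auto
qed

lemma mv_in: "a \<in> compositions n M \<Longrightarrow> i \<in> {1..n} \<Longrightarrow> 0 < a i \<Longrightarrow> mv n a i \<in> compositions n M"
  unfolding mv_def using nxt_in[of i n] by (intro shift_in) auto
lemma mb_in: "a \<in> compositions n M \<Longrightarrow> i \<in> {1..n} \<Longrightarrow> 0 < a (nxt n i) \<Longrightarrow> mb n a i \<in> compositions n M"
  unfolding mb_def using nxt_in[of i n] by (intro shift_in) auto
lemma mv_mb: "0 < a (nxt n i) \<Longrightarrow> mv n (mb n a i) i = a"
  unfolding mv_def mb_def by auto
lemma mb_mv: "0 < a i \<Longrightarrow> mb n (mv n a i) i = a"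
  unfolding mv_def mb_def by auto
lemma mv_pos: "0 < a i \<Longrightarrow> 0 < mv n a i (nxt n i)"
  unfolding mv_def by auto
lemma mb_pos: "0 < a (nxt n i) \<Longrightarrow> 0 < mb n a i i"
  unfolding mb_def by auto

definition mu :: "(nat \<Rightarrow> real) \<Rightarrow> real \<Rightarrow> nat \<Rightarrow> (nat \<Rightarrow> nat) \<Rightarrow> real" where
  "mu x t n a = (\<Prod>l=1..n. x l ^ a l / qfact t (a l))"

lemma mu_pos: "\<forall>i\<in>{1..n}. 0 < x i \<Longrightarrow> 0 < t \<Longrightarrow> 0 < mu x t n a"
  unfolding mu_def by (intro prod_pos) (auto intro!: divide_pos_pos qfact_pos)

lemma phi_step:
  assumes "0 < (y::real)" "0 < t"
  shows "y ^ Suc a / qfact t (Suc a) * (inverse y * qint t (Suc a)) = y ^ a / qfact t a"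
proof -
  have "qint t (Suc a) \<noteq> 0" using qint_pos[OF assms(2)] by (metis less_irrefl zero_less_Suc)
  moreover have "qfact t a \<noteq> 0" using qfact_pos[OF assms(2)] by (metis less_irrefl)
  ultimately show ?thesis using assms by (simp add: qfact_Suc field_simps)
qed

lemma prod_two:
  assumes "finite A" "i \<in> A" "i' \<in> A" "i \<noteq> i'"
  shows "prod f A = f i * f i' * prod f (A - {i} - {i'})"
  using assms by (simp add: prod.remove[of A i] prod.remove[of "A - {i}" i'] mult.assoc)

lemma mu_rb:
  assumes x: "\<forall>i\<in>{1..n}. 0 < x i" and t: "0 < t" and i: "i \<in> {1..n}" and pos: "0 < a i"
  shows "mu x t n a * rb x t a i = mu x t n (mv n a i) * rb x t (mv n a i) (nxt n i)"
proof (cases "nxt n i = i")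
  case True
  then have "mv n a i = a" unfolding mv_def using pos by auto
  then show ?thesis using True by simp
next
  case False
  let ?i' = "nxt n i" and ?A = "{1..n} - {i} - {nxt n i}"
  have i': "?i' \<in> {1..n}" using nxt_in[OF i] .
  let ?b = "mv n a i"
  have bi: "?b i = a i - 1" and bi': "?b ?i' = a ?i' + 1" and bo: "\<And>l. l \<in> ?A \<Longrightarrow> ?b l = a l"
    using False unfolding mv_def by auto
  let ?phi = "\<lambda>l c. x l ^ c / qfact t c"
  have P: "(\<Prod>l\<in>?A. ?phi l (?b l)) = (\<Prod>l\<in>?A. ?phi l (a l))" using bo by (intro prod.cong) auto
  obtain c where c: "a i = Suc c" using pos by (cases "a i") auto
  have xi: "0 < x i" and xi': "0 < x ?i'" using x i i' by auto
  have mua: "mu x t n a = ?phi i (a i) * ?phi ?i' (a ?i') * (\<Prod>l\<in>?A. ?phi l (a l))"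
    unfolding mu_def by (rule prod_two) (use i i' False in auto)
  have mub: "mu x t n ?b = ?phi i (?b i) * ?phi ?i' (?b ?i') * (\<Prod>l\<in>?A. ?phi l (?b l))"
    unfolding mu_def by (rule prod_two) (use i i' False in auto)
  have "mu x t n a * rb x t a i = ?phi i (a i) * inverse (x i) * qint t (a i) * ?phi ?i' (a ?i') * (\<Prod>l\<in>?A. ?phi l (a l))"
    unfolding mua rb_def by (simp add: ac_simps)
  also have "\<dots> = ?phi i c * ?phi ?i' (a ?i') * (\<Prod>l\<in>?A. ?phi l (a l))"
    using phi_step[OF xi t, of c] c by (simp add: ac_simps)
  also have "\<dots> = ?phi i c * (?phi ?i' (Suc (a ?i')) * (inverse (x ?i') * qint t (Suc (a ?i')))) * (\<Prod>l\<in>?A. ?phi l (a l))"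
    using phi_step[OF xi' t, of "a ?i'"] by simp
  also have "\<dots> = mu x t n ?b * rb x t ?b ?i'"
    unfolding mub rb_def P bi bi' c by (simp add: ac_simps)
  finally show ?thesis .
qed



lemma rb_zero: "a i = 0 \<Longrightarrow> rb x t a i = 0" by (simp add: rb_def)

lemma gen_mu_i:
  assumes x: "\<forall>i\<in>{1..n}. 0 < x i" and t: "0 < t" and i: "i \<in> {1..n}"
  shows "(\<Sum>a\<in>compositions n M. mu x t n a * rb x t a i * G (mv n a i))
       = (\<Sum>a\<in>compositions n M. mu x t n a * rb x t a (nxt n i) * G a)"
proof -
  let ?E = "compositions n M"
  let ?S = "{a\<in>?E. 0 < a i}" and ?T = "{a\<in>?E. 0 < a (nxt n i)}"
  have "(\<Sum>a\<in>?E. mu x t n a * rb x t a i * G (mv n a i)) = (\<Sum>a\<in>?S. mu x t n a * rb x t a i * G (mv n a i))"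
    by (rule sum.mono_neutral_right) (auto simp: compositions_finite rb_zero)
  also have "\<dots> = (\<Sum>a\<in>?T. mu x t n a * rb x t a (nxt n i) * G a)"
  proof (rule sum.reindex_bij_witness[where i="\<lambda>a. mb n a i" and j="\<lambda>a. mv n a i"])
    show "\<And>a. a \<in> ?S \<Longrightarrow> mb n (mv n a i) i = a" by (simp add: mb_mv)
    show "\<And>a. a \<in> ?S \<Longrightarrow> mv n a i \<in> ?T" using i by (auto simp: mv_in mv_pos)
    show "\<And>b. b \<in> ?T \<Longrightarrow> mv n (mb n b i) i = b" by (simp add: mv_mb)
    show "\<And>b. b \<in> ?T \<Longrightarrow> mb n b i \<in> ?S" using i by (auto simp: mb_in mb_pos)
    show "\<And>a. a \<in> ?S \<Longrightarrow> mu x t n (mv n a i) * rb x t (mv n a i) (nxt n i) * G (mv n a i)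
        = mu x t n a * rb x t a i * G (mv n a i)"
      using mu_rb[OF x t i] by simp
  qed
  also have "\<dots> = (\<Sum>a\<in>?E. mu x t n a * rb x t a (nxt n i) * G a)"
    by (rule sum.mono_neutral_left) (auto simp: compositions_finite rb_zero)
  finally show ?thesis .
qed

definition prv :: "nat \<Rightarrow> nat \<Rightarrow> nat" where "prv n l = (if l = 1 then n else l - 1)"

lemma sum_nxt: "(\<Sum>i=1..n. f (nxt n i)) = (\<Sum>i=1..n. (f i :: real))"
proof (rule sum.reindex_bij_witness[where i="prv n" and j="nxt n"])
qed (auto simp: prv_def nxt_def)

lemma gen_mu:
  assumes x: "\<forall>i\<in>{1..n}. 0 < x i" and t: "0 < t"
  shows "(\<Sum>a\<in>compositions n M. mu x t n a * Lbar n x t G a) = 0"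
proof -
  let ?E = "compositions n M"
  have "(\<Sum>a\<in>?E. mu x t n a * Lbar n x t G a)
      = (\<Sum>a\<in>?E. \<Sum>i=1..n. mu x t n a * rb x t a i * G (mv n a i) - mu x t n a * rb x t a i * G a)"
    unfolding Lbar_def sum_distrib_left by (intro sum.cong refl) (simp add: algebra_simps)
  also have "\<dots> = (\<Sum>i=1..n. \<Sum>a\<in>?E. mu x t n a * rb x t a i * G (mv n a i)) - (\<Sum>i=1..n. \<Sum>a\<in>?E. mu x t n a * rb x t a i * G a)"
    by (simp add: sum_subtractf sum.swap[of _ ?E])
  also have "(\<Sum>i=1..n. \<Sum>a\<in>?E. mu x t n a * rb x t a i * G (mv n a i)) = (\<Sum>i=1..n. \<Sum>a\<in>?E. mu x t n a * rb x t a (nxt n i) * G a)"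
    by (rule sum.cong[OF refl], rule gen_mu_i[OF x t], assumption)
  also have "\<dots> = (\<Sum>i=1..n. \<Sum>a\<in>?E. mu x t n a * rb x t a i * G a)"
    by (rule sum_nxt[where f="\<lambda>i. \<Sum>a\<in>?E. mu x t n a * rb x t a i * G a"])
  finally show ?thesis by simp
qed



lemma reach:
  assumes n: "1 \<le> n"
    and cl: "\<And>b0 b i. b0 \<in> compositions n M \<Longrightarrow> P b0 \<Longrightarrow> b \<in> compositions n M \<Longrightarrow> i \<in> {1..n}
             \<Longrightarrow> 0 < b i \<Longrightarrow> mv n b i = b0 \<Longrightarrow> P b"
    and a0: "a0 \<in> compositions n M" "P a0"
  shows "P (\<lambda>l. if l = 1 then M else 0)"
  using a0
proof (induction "\<Sum>l=1..n. a0 l * l" arbitrary: a0 rule: less_induct)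
  case less
  show ?case
  proof (cases "\<exists>l\<in>{2..n}. 0 < a0 l")
    case False
    have "(\<Sum>l=1..n. a0 l) = a0 1 + (\<Sum>l=2..n. a0 l)"
      using n by (simp add: sum.atLeast_Suc_atMost numeral_2_eq_2)
    also have "(\<Sum>l=2..n. a0 l) = 0" using False by auto
    finally have "a0 1 = M" using less.prems unfolding compositions_def by simp
    have "a0 = (\<lambda>l. if l = 1 then M else 0)"
    proof
      fix l
      show "a0 l = (if l = 1 then M else 0)"
      proof (cases "l \<in> {2..n}")
        case True then show ?thesis using False by auto
      next
        case F2: False
        then have "l = 1 \<or> l \<notin> {1..n}" by auto
        then show ?thesis using \<open>a0 1 = M\<close> less.prems unfolding compositions_def by auto
      qed
    qed
    then show ?thesis using less.prems by simp
  next
    case True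
    then obtain l where l: "l \<in> {2..n}" "0 < a0 l" by blast
    define i where "i = l - 1"
    have i: "i \<in> {1..n}" and li: "nxt n i = l" and il: "i < l" using l unfolding i_def nxt_def by auto
    define b where "b = mb n a0 i"
    have bE: "b \<in> compositions n M" unfolding b_def using mb_in[OF less.prems(1) i] li l by simp
    have bi: "0 < b i" unfolding b_def using mb_pos[of a0 n i] li l by simp
    have mvb: "mv n b i = a0" unfolding b_def using mv_mb[of a0 n i] li l by simp
    have Pb: "P b" using cl[OF less.prems(1) less.prems(2) bE i bi mvb] .
    obtain c where c: "a0 l = Suc c" using l(2) by (cases "a0 l") auto
    have pt: "\<And>p. b p * p + (if p = l then l else 0) = a0 p * p + (if p = i then i else 0)"
      unfolding b_def mb_def li using il c by auto
    have "(\<Sum>p=1..n. b p * p) + (\<Sum>p=1..n. (if p = l then l else 0)) = (\<Sum>p=1..n. a0 p * p) + (\<Sum>p=1..n. (if p = i then i else 0))"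
      by (simp only: sum.distrib[symmetric] pt)
    then have "(\<Sum>p=1..n. b p * p) + l = (\<Sum>p=1..n. a0 p * p) + i" using i l by simp
    then have "(\<Sum>p=1..n. b p * p) < (\<Sum>p=1..n. a0 p * p)" using il by linarith
    then show ?thesis using less.hyps bE Pb by blast
  qed
qed

definition Wt :: "nat \<Rightarrow> (nat \<Rightarrow> real) \<Rightarrow> real \<Rightarrow> (nat \<Rightarrow> nat) \<Rightarrow> (nat \<Rightarrow> nat) \<Rightarrow> real" where
  "Wt n x t a0 a = (\<Sum>i=1..n. rb x t a i * (if mv n a i = a0 then 1 else 0))"
definition qq :: "nat \<Rightarrow> (nat \<Rightarrow> real) \<Rightarrow> real \<Rightarrow> (nat \<Rightarrow> nat) \<Rightarrow> real" where
  "qq n x t a = (\<Sum>i=1..n. rb x t a i)"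

lemma bal:
  assumes g: "\<And>G. (\<Sum>a\<in>compositions n M. \<nu> a * Lbar n x t G a) = 0" and a0: "a0 \<in> compositions n M"
  shows "(\<Sum>a\<in>compositions n M. \<nu> a * Wt n x t a0 a) = \<nu> a0 * qq n x t a0"
proof -
  let ?E = "compositions n M"
  have L: "\<And>a. Lbar n x t (\<lambda>b. if b = a0 then 1 else 0) a = Wt n x t a0 a - (if a = a0 then qq n x t a else 0)"
    unfolding Lbar_def Wt_def qq_def by (cases "a = a0") (simp_all add: right_diff_distrib sum_subtractf)
  have "0 = (\<Sum>a\<in>?E. \<nu> a * Lbar n x t (\<lambda>b. if b = a0 then 1 else 0) a)"
    using g[of "\<lambda>b. if b = a0 then 1 else 0"] by simp
  also have "\<dots> = (\<Sum>a\<in>?E. \<nu> a * Wt n x t a0 a - (if a = a0 then \<nu> a * qq n x t a else 0))"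
    by (intro sum.cong refl) (simp add: L right_diff_distrib)
  also have "\<dots> = (\<Sum>a\<in>?E. \<nu> a * Wt n x t a0 a) - \<nu> a0 * qq n x t a0"
    using a0 compositions_finite by (simp add: sum_subtractf sum.delta')
  finally show ?thesis by simp
qed

lemma rb_nonneg: "\<forall>i\<in>{1..n}. 0 < x i \<Longrightarrow> 0 < t \<Longrightarrow> i \<in> {1..n} \<Longrightarrow> 0 \<le> rb x t a i"
  unfolding rb_def by (intro mult_nonneg_nonneg qint_nonneg) (auto simp: less_imp_le)

lemma Wt_nonneg: "\<forall>i\<in>{1..n}. 0 < x i \<Longrightarrow> 0 < t \<Longrightarrow> 0 \<le> Wt n x t a0 a"
  unfolding Wt_def by (intro sum_nonneg) (simp add: rb_nonneg)

lemma Wt_pos: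
  assumes x: "\<forall>i\<in>{1..n}. 0 < x i" and t: "0 < t" and i: "i \<in> {1..n}" "0 < a i" "mv n a i = a0"
  shows "0 < Wt n x t a0 a"
proof -
  have "0 < rb x t a i" unfolding rb_def using x t i by (auto intro!: mult_pos_pos qint_pos)
  also have "rb x t a i = rb x t a i * (if mv n a i = a0 then 1 else 0)" using i by simp
  also have "\<dots> \<le> Wt n x t a0 a" unfolding Wt_def
    by (rule member_le_sum) (use i in \<open>auto intro!: rb_nonneg[OF x t]\<close>)
  finally show ?thesis .
qed

lemma maxprin:
  assumes x: "\<forall>i\<in>{1..n}. 0 < x i" and t: "0 < t" and n: "1 \<le> n"
    and H: "\<And>a0. a0 \<in> compositions n M \<Longrightarrow>
        (\<Sum>a\<in>compositions n M. mu x t n a * Wt n x t a0 a * (h a0 - h a)) = 0"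
    and a0: "a0 \<in> compositions n M" and mx: "\<forall>a\<in>compositions n M. h a \<le> h a0"
  shows "h (\<lambda>l. if l = 1 then M else 0) = h a0"
proof -
  let ?E = "compositions n M"
  have cl: "h b = h a0" if "b0 \<in> ?E" "h b0 = h a0" "b \<in> ?E" "i \<in> {1..n}" "0 < b i" "mv n b i = b0" for b0 b i
  proof -
    have nn: "\<And>a. a\<in>?E \<Longrightarrow> 0 \<le> mu x t n a * Wt n x t b0 a * (h b0 - h a)"
      using mx that(2) less_imp_le[OF mu_pos[OF x t]] Wt_nonneg[OF x t] by (auto intro!: mult_nonneg_nonneg)
    have "mu x t n b * Wt n x t b0 b * (h b0 - h b) = 0"
      using H[OF that(1)] sum_nonneg_eq_0_iff[OF compositions_finite[of n M], of "\<lambda>a. mu x t n a * Wt n x t b0 a * (h b0 - h a)", OF nn] that(3) by blast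
    moreover have "0 < mu x t n b * Wt n x t b0 b"
      using mu_pos[OF x t] Wt_pos[OF x t that(4-6)] by simp
    ultimately have "h b0 - h b = 0" by (metis mult_eq_0_iff less_irrefl)
    then show ?thesis using that(2) by simp
  qed
  show ?thesis
    using reach[where P="\<lambda>b. h b = h a0", OF n cl a0 refl] by simp
qed



lemma H_mu: "Htilde1 n x t N = qfact t N * (\<Sum>a\<in>compositions n N. mu x t n a)"
  unfolding Htilde1_def mu_def sum_distrib_left
  by (intro sum.cong refl) (simp add: prod_dividef)

definition dec1 :: "(nat \<Rightarrow> nat) \<Rightarrow> nat \<Rightarrow> nat" where "dec1 a = (\<lambda>l. if l = 1 then a l - 1 else a l)"
definition inc1 :: "(nat \<Rightarrow> nat) \<Rightarrow> nat \<Rightarrow> nat" where "inc1 a = (\<lambda>l. if l = 1 then a l + 1 else a l)"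

lemma mu_rb1:
  assumes x: "\<forall>i\<in>{1..n}. 0 < x i" and t: "0 < t" and n: "1 \<le> n" and pos: "0 < a 1"
  shows "mu x t n a * rb x t a 1 = mu x t n (dec1 a)"
proof -
  let ?phi = "\<lambda>l c. x l ^ c / qfact t c"
  have A: "{1..n} = insert 1 {2..n}" using n by auto
  have P: "(\<Prod>l=2..n. ?phi l (dec1 a l)) = (\<Prod>l=2..n. ?phi l (a l))"
    by (intro prod.cong) (auto simp: dec1_def)
  obtain c where c: "a 1 = Suc c" using pos by (cases "a 1") auto
  have x1: "0 < x 1" using x n by auto
  have "mu x t n a * rb x t a 1 = ?phi 1 (a 1) * (inverse (x 1) * qint t (a 1)) * (\<Prod>l=2..n. ?phi l (a l))"
    unfolding mu_def rb_def A by (simp add: ac_simps)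
  also have "\<dots> = ?phi 1 c * (\<Prod>l=2..n. ?phi l (a l))"
    using phi_step[OF x1 t, of c] c by simp
  also have "\<dots> = mu x t n (dec1 a)"
    unfolding mu_def A using P c by (simp add: dec1_def)
  finally show ?thesis .
qed

lemma sum_mu_rb1:
  assumes x: "\<forall>i\<in>{1..n}. 0 < x i" and t: "0 < t" and n: "1 \<le> n" and M: "1 \<le> M"
  shows "(\<Sum>a\<in>compositions n M. mu x t n a * rb x t a 1) = (\<Sum>b\<in>compositions n (M - 1). mu x t n b)"
proof -
  let ?E = "compositions n M" and ?S = "{a\<in>compositions n M. 0 < a 1}"
  have "(\<Sum>a\<in>?E. mu x t n a * rb x t a 1) = (\<Sum>a\<in>?S. mu x t n a * rb x t a 1)"
    by (rule sum.mono_neutral_right) (auto simp: compositions_finite rb_zero)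
  also have "\<dots> = (\<Sum>b\<in>compositions n (M - 1). mu x t n b)"
  proof (rule sum.reindex_bij_witness[where i=inc1 and j=dec1])
    show "\<And>a. a \<in> ?S \<Longrightarrow> inc1 (dec1 a) = a" by (auto simp: inc1_def dec1_def)
    show "\<And>a. a \<in> ?S \<Longrightarrow> dec1 a \<in> compositions n (M - 1)"
    proof -
      fix a assume a: "a \<in> ?S"
      have pt: "\<And>l. dec1 a l + (if l = 1 then 1 else 0) = a l" using a by (auto simp: dec1_def)
      have "(\<Sum>l=1..n. dec1 a l) + (\<Sum>l=1..n. (if l = 1 then 1 else 0)) = (\<Sum>l=1..n. a l)"
        by (simp only: sum.distrib[symmetric] pt)
      then have "(\<Sum>l=1..n. dec1 a l) = M - 1" using a n unfolding compositions_def by simp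
      then show "dec1 a \<in> compositions n (M - 1)" using a unfolding compositions_def dec1_def by auto
    qed
    show "\<And>b. b \<in> compositions n (M - 1) \<Longrightarrow> dec1 (inc1 b) = b" by (auto simp: inc1_def dec1_def)
    show "\<And>b. b \<in> compositions n (M - 1) \<Longrightarrow> inc1 b \<in> ?S"
    proof -
      fix b assume b: "b \<in> compositions n (M - 1)"
      have pt: "\<And>l. inc1 b l = b l + (if l = 1 then 1 else 0)" by (auto simp: inc1_def)
      have "(\<Sum>l=1..n. inc1 b l) = (\<Sum>l=1..n. b l) + (\<Sum>l=1..n. (if l = 1 then 1 else 0))"
        by (simp only: sum.distrib[symmetric] pt)
      then have "(\<Sum>l=1..n. inc1 b l) = M" using b n M unfolding compositions_def by simp
      then show "inc1 b \<in> ?S" using b n unfolding compositions_def inc1_def by auto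
    qed
    show "\<And>a. a \<in> ?S \<Longrightarrow> mu x t n (dec1 a) = mu x t n a * rb x t a 1"
      using mu_rb1[OF x t n] by simp
  qed
  finally show ?thesis .
qed

lemma ex_max:
  assumes "finite S" "S \<noteq> {}"
  shows "\<exists>a\<in>S. \<forall>b\<in>S. (g b::real) \<le> g a"
proof -
  have "Max (g ` S) \<in> g ` S" using assms by (intro Max_in) auto
  then obtain a where "a \<in> S" "g a = Max (g ` S)" by auto
  moreover have "\<forall>b\<in>S. g b \<le> Max (g ` S)" using assms by (auto intro: Max_ge)
  ultimately show ?thesis by metis
qed

lemma Acur:
  assumes st: "stationary k m n x t \<pi>" and x: "\<forall>i\<in>{1..n}. 0 < x i" and t: "0 < t" and n: "1 \<le> n"
    and j0: "1 \<le> j0" "j0 \<le> k" and M: "M = (\<Sum>l=j0..k. m l)" and M1: "1 \<le> M"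
  shows "(\<Sum>w\<in>configs k m n. \<pi> w * (inverse (x 1) * qint t (prj j0 k w 1)))
       = qint t M * Htilde1 n x t (M - 1) / Htilde1 n x t M"
proof -
  let ?E = "compositions n M" and ?C = "configs k m n"
  let ?p = "pb k m n j0 \<pi>"
  define f where "f a = ?p a / mu x t n a" for a
  have pf: "\<And>a. ?p a = f a * mu x t n a" unfolding f_def using mu_pos[OF x t] by (simp add: less_imp_neq[symmetric])
  have gP: "\<And>G. (\<Sum>a\<in>?E. ?p a * Lbar n x t G a) = 0" using gen_pb[OF st j0] M by simp
  have gM: "\<And>G. (\<Sum>a\<in>?E. mu x t n a * Lbar n x t G a) = 0" using gen_mu[OF x t] .
  have key: "(\<Sum>a\<in>?E. mu x t n a * Wt n x t a0 a * (f a0 - f a)) = 0" if a0: "a0 \<in> ?E" for a0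
  proof -
    have "(\<Sum>a\<in>?E. mu x t n a * Wt n x t a0 a * (f a0 - f a))
       = f a0 * (\<Sum>a\<in>?E. mu x t n a * Wt n x t a0 a) - (\<Sum>a\<in>?E. ?p a * Wt n x t a0 a)"
      by (simp add: pf sum_distrib_left sum_subtractf[symmetric] algebra_simps)
    also have "\<dots> = 0" using bal[OF gM a0] bal[OF gP a0] pf[of a0] by simp
    finally show ?thesis .
  qed
  have keyn: "(\<Sum>a\<in>?E. mu x t n a * Wt n x t a0 a * ((- f) a0 - (- f) a)) = 0" if a0: "a0 \<in> ?E" for a0
  proof -
    have "(\<Sum>a\<in>?E. mu x t n a * Wt n x t a0 a * ((- f) a0 - (- f) a))
        = - (\<Sum>a\<in>?E. mu x t n a * Wt n x t a0 a * (f a0 - f a))"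
      by (simp add: sum_negf[symmetric] algebra_simps)
    then show ?thesis using key[OF a0] by simp
  qed
  let ?c = "\<lambda>l. if l = 1 then M else 0"
  have cE: "?c \<in> ?E" using n unfolding compositions_def by (auto simp: sum.delta)
  have fin: "finite ?E" by (rule compositions_finite)
  have ne: "?E \<noteq> {}" using cE by blast
  obtain amax where amax: "amax \<in> ?E" "\<forall>a\<in>?E. f a \<le> f amax"
    using ex_max[OF fin ne, of f] by blast
  obtain amin where amin: "amin \<in> ?E" "\<forall>a\<in>?E. (- f) a \<le> (- f) amin"
    using ex_max[OF fin ne, of "- f"] by blast
  have e1: "f ?c = f amax" using maxprin[OF x t n key amax(1) amax(2)] .
  have e2: "(- f) ?c = (- f) amin" using maxprin[OF x t n keyn amin(1) amin(2)] .
  define K where "K = f ?c"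
  have fK: "f a = K" if a: "a \<in> ?E" for a
  proof -
    have "f a \<le> f amax" using amax(2) a by blast
    moreover have "- f a \<le> - f amin" using amin(2) a by auto
    moreover have "f ?c = f amin" using e2 by simp
    ultimately show ?thesis using e1 unfolding K_def by linarith
  qed
  have pK: "\<And>a. a \<in> ?E \<Longrightarrow> ?p a = K * mu x t n a" using fK pf by simp
  have fin_C: "finite ?C" by (rule stat_finite[OF st])
  have "1 = (\<Sum>w\<in>?C. \<pi> w * 1)" using st unfolding stationary_def by simp
  also have "\<dots> = (\<Sum>a\<in>?E. ?p a * 1)" using fiber_sum[OF fin_C j0(1), of \<pi> "\<lambda>_. 1"] M by simp
  also have "\<dots> = K * (\<Sum>a\<in>?E. mu x t n a)" using pK by (simp add: sum_distrib_left)
  finally have K1: "K * (\<Sum>a\<in>?E. mu x t n a) = 1" by simp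
  have "(\<Sum>w\<in>?C. \<pi> w * (inverse (x 1) * qint t (prj j0 k w 1))) = (\<Sum>w\<in>?C. \<pi> w * rb x t (prj j0 k w) 1)"
    by (simp add: rb_def)
  also have "\<dots> = (\<Sum>a\<in>?E. ?p a * rb x t a 1)"
    using fiber_sum[OF fin_C j0(1), of \<pi> "\<lambda>a. rb x t a 1"] M by simp
  also have "\<dots> = K * (\<Sum>a\<in>?E. mu x t n a * rb x t a 1)" using pK by (simp add: sum_distrib_left mult.assoc)
  also have "\<dots> = K * (\<Sum>b\<in>compositions n (M - 1). mu x t n b)" using sum_mu_rb1[OF x t n M1] by simp
  finally have L: "(\<Sum>w\<in>?C. \<pi> w * (inverse (x 1) * qint t (prj j0 k w 1))) = K * (\<Sum>b\<in>compositions n (M - 1). mu x t n b)" .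
  obtain M' where M': "M = Suc M'" using M1 by (cases M) auto
  have qf: "qfact t M = qfact t M' * qint t M" using M' qfact_Suc by simp
  have q1: "qfact t M' \<noteq> 0" "qint t M \<noteq> 0" using qfact_pos[OF t] qint_pos[OF t] M' by (auto simp: less_imp_neq[symmetric])
  have Z: "(\<Sum>a\<in>?E. mu x t n a) \<noteq> 0" using K1 by auto
  show ?thesis unfolding L H_mu using K1 Z q1 qf M'
    by (simp add: field_simps)
qed



lemma M_pos: "\<forall>i\<in>{1..k}. 0 < (m::nat\<Rightarrow>nat) i \<Longrightarrow> 1 \<le> j0 \<Longrightarrow> j0 \<le> k \<Longrightarrow> 1 \<le> (\<Sum>l=j0..k. m l)"
  using member_le_sum[of j0 "{j0..k}" m] by force

theorem theorem7:
  fixes k n :: nat and m :: "nat \<Rightarrow> nat" and x :: "nat \<Rightarrow> real" and t :: real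
    and \<pi> :: "(nat \<Rightarrow> nat \<Rightarrow> nat) \<Rightarrow> real" and j :: nat
  assumes "\<forall>i\<in>{1..k}. 0 < m i"
    and "1 \<le> n"
    and "\<forall>i\<in>{1..n}. 0 < x i"
    and "0 < t"
    and "stationary k m n x t \<pi>"
    and "1 \<le> j" and "j \<le> k"
  shows "current k m n x t \<pi> j =
           (let M = (\<lambda>i. \<Sum>l=i..k. m l) in
              qint t (M j) * Htilde1 n x t (M j - 1) / Htilde1 n x t (M j)
              - (if j = k then 0
                 else qint t (M (j+1)) * Htilde1 n x t (M (j+1) - 1) / Htilde1 n x t (M (j+1))))"
proof -
  note mpos = assms(1) and n = assms(2) and x = assms(3) and t = assms(4) and st = assms(5)
    and j = assms(6,7)
  let ?C = "configs k m n"
  let ?A = "\<lambda>j0. (\<Sum>w\<in>?C. \<pi> w * (inverse (x 1) * qint t (prj j0 k w 1)))"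
  have jr: "jump_rate k x t w 1 j = inverse (x 1) * qint t (prj j k w 1) - inverse (x 1) * qint t (prj (Suc j) k w 1)" for w
  proof -
    have l: "larger k w 1 j = prj (Suc j) k w 1"
      unfolding larger_def prj_def by (intro sum.cong) auto
    have p: "prj j k w 1 = w 1 j + prj (Suc j) k w 1"
      unfolding prj_def using j by (simp add: sum.atLeast_Suc_atMost)
    show ?thesis unfolding jump_rate_def l p qint_add by (simp add: algebra_simps)
  qed
  have cur: "current k m n x t \<pi> j = ?A j - ?A (Suc j)"
    unfolding current_def jr by (simp add: algebra_simps sum_subtractf)
  have Aj: "?A j = qint t (\<Sum>l=j..k. m l) * Htilde1 n x t ((\<Sum>l=j..k. m l) - 1) / Htilde1 n x t (\<Sum>l=j..k. m l)"
    by (rule Acur[OF st x t n j refl M_pos[OF mpos j]])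
  show ?thesis
  proof (cases "j = k")
    case True
    have "?A (Suc j) = 0" using True by (simp add: prj_def)
    then show ?thesis using cur Aj True by (simp add: Let_def)
  next
    case False
    have j1: "1 \<le> Suc j" "Suc j \<le> k" using j False by auto
    have "?A (Suc j) = qint t (\<Sum>l=Suc j..k. m l) * Htilde1 n x t ((\<Sum>l=Suc j..k. m l) - 1) / Htilde1 n x t (\<Sum>l=Suc j..k. m l)"
      by (rule Acur[OF st x t n j1 refl M_pos[OF mpos j1]])
    then show ?thesis using cur Aj False by (simp add: Let_def)
  qed
qed


end
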